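(* Let $S$ be a connected shape in the triangular grid with at least two points, and let $v \in S$. Then $v$ is erodable with respect to $S$ if and only if $v$ has exactly one local boundary $B$ in $S$ and $B$ is a local outer boundary.
   Context: The triangular grid $G$ has as vertices ("points") the points of the regular triangular lattice in the plane, two points adjacent iff at unit distance; each point has six incident edges, cyclically ordered clockwise. A shape is a finite set of points, identified with its induced subgraph. A connected shape $S$ partitions the plane into faces; the unique unbounded one is the outer face, and a bounded face containing a grid point not in $S$ is a hole. The outer boundary of $S$ is the set of points of $S$ lying on the boundary of the outer face. A boundary point of $S$ is a point of $S$ adjacent to some point not in $S$. For a boundary point $v$, a local boundary of $v$ (w.r.t. $S$) is a maximal clockwise cyclic interval of consecutive edges incident to $v$ whose other endpoints are not in $S$; it is a local outer boundary if these other endpoints lie in the outer face of $S$. A point $v \in S$ is redundant if the subgraph induced by the neighbors of $v$ in $S$ is connected (i.e., removing $v$ does not disconnect its 1-hop neighborhood in $S$). A point is erodable w.r.t. $S$ if it is redundant and lies on the outer boundary of $S$. *)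

theory Defs
  imports "HOL-Analysis.Analysis"
begin

text \<open>Points of the triangular lattice: pairs (a,b) standing for a*e1 + b*e2,
  with e1 = (1,0), e2 = (1/2, sqrt 3 / 2).\<close>
type_synonym point = "int \<times> int"

text \<open>The six directions, listed in clockwise cyclic order (index i, i < 6).\<close>
definition dir :: "nat \<Rightarrow> int \<times> int" where
  "dir i = [(1,0), (1,-1), (0,-1), (-1,0), (-1,1), (0,1)] ! (i mod 6)"

definition nbr :: "point \<Rightarrow> nat \<Rightarrow> point" where
  "nbr p i = (fst p + fst (dir i), snd p + snd (dir i))"

definition adj :: "point \<Rightarrow> point \<Rightarrow> bool" where
  "adj p q \<longleftrightarrow> (\<exists>i<6. q = nbr p i)"

definition emb :: "point \<Rightarrow> complex" where
  "emb p = Complex (of_int (fst p) + of_int (snd p) / 2) (of_int (snd p) * sqrt 3 / 2)"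

definition grid_connected :: "point set \<Rightarrow> bool" where
  "grid_connected A \<longleftrightarrow>
     (\<forall>p\<in>A. \<forall>q\<in>A. (p, q) \<in> {(x, y). x \<in> A \<and> y \<in> A \<and> adj x y}\<^sup>*)"

definition connected_shape :: "point set \<Rightarrow> bool" where
  "connected_shape S \<longleftrightarrow> finite S \<and> grid_connected S"

definition drawing :: "point set \<Rightarrow> complex set" where
  "drawing S = emb ` S \<union>
     (\<Union>{closed_segment (emb p) (emb q) | p q. p \<in> S \<and> q \<in> S \<and> adj p q})"

definition outer_face :: "point set \<Rightarrow> complex set" where
  "outer_face S = {x. \<not> bounded (connected_component_set (- drawing S) x)}"

definition outer_boundary :: "point set \<Rightarrow> point set" where
  "outer_boundary S = {v \<in> S. emb v \<in> frontier (outer_face S)}"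

definition redundant :: "point set \<Rightarrow> point \<Rightarrow> bool" where
  "redundant S v \<longleftrightarrow> v \<in> S \<and> grid_connected {q \<in> S. adj v q}"

definition erodable :: "point set \<Rightarrow> point \<Rightarrow> bool" where
  "erodable S v \<longleftrightarrow> redundant S v \<and> v \<in> outer_boundary S"

definition cyclic_interval :: "nat set \<Rightarrow> bool" where
  "cyclic_interval I \<longleftrightarrow> (\<exists>s<6. \<exists>k. 1 \<le> k \<and> k \<le> 6 \<and> I = {(s + j) mod 6 | j. j < k})"

definition free_interval :: "point set \<Rightarrow> point \<Rightarrow> nat set \<Rightarrow> bool" where
  "free_interval S v I \<longleftrightarrow> cyclic_interval I \<and> (\<forall>i\<in>I. nbr v i \<notin> S)"

definition local_boundary :: "point set \<Rightarrow> point \<Rightarrow> nat set \<Rightarrow> bool" where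
  "local_boundary S v I \<longleftrightarrow> free_interval S v I \<and>
     (\<forall>J. free_interval S v J \<and> I \<subseteq> J \<longrightarrow> J = I)"

definition local_outer_boundary :: "point set \<Rightarrow> point \<Rightarrow> nat set \<Rightarrow> bool" where
  "local_outer_boundary S v I \<longleftrightarrow> local_boundary S v I \<and>
     (\<forall>i\<in>I. emb (nbr v i) \<in> outer_face S)"

end

theory Submission
  imports Defs
begin

definition E :: "real \<Rightarrow> real \<Rightarrow> complex" where
  "E x y = Complex (x + y/2) (y * sqrt 3 / 2)"
definition Lx :: "complex \<Rightarrow> real" where "Lx z = Re z - Im z / sqrt 3"
definition Ly :: "complex \<Rightarrow> real" where "Ly z = 2 * Im z / sqrt 3"
definition ed :: "nat \<Rightarrow> complex" where "ed i = emb (dir i)"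

lemma Lx_E[simp]: "Lx (E x y) = x" by (simp add: Lx_def E_def)
lemma Ly_E[simp]: "Ly (E x y) = y" by (simp add: Ly_def E_def)
lemma E_L: "E (Lx z) (Ly z) = z"
  by (simp add: Lx_def Ly_def E_def complex_eq_iff field_simps)
lemma L_eq: "Lx z = Lx w \<Longrightarrow> Ly z = Ly w \<Longrightarrow> z = w"
  by (metis E_L)
lemma Lx_add[simp]: "Lx (z + w) = Lx z + Lx w" by (simp add: Lx_def algebra_simps add_divide_distrib)
lemma Ly_add[simp]: "Ly (z + w) = Ly z + Ly w" by (simp add: Ly_def algebra_simps add_divide_distrib)
lemma Lx_diff[simp]: "Lx (z - w) = Lx z - Lx w" by (simp add: Lx_def algebra_simps diff_divide_distrib)
lemma Ly_diff[simp]: "Ly (z - w) = Ly z - Ly w" by (simp add: Ly_def algebra_simps diff_divide_distrib)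
lemma Lx_scale[simp]: "Lx (c *\<^sub>R z) = c * Lx z" by (simp add: Lx_def algebra_simps)
lemma Ly_scale[simp]: "Ly (c *\<^sub>R z) = c * Ly z" by (simp add: Ly_def algebra_simps)
lemma emb_E: "emb p = E (of_int (fst p)) (of_int (snd p))" by (simp add: emb_def E_def)
lemma Lx_emb[simp]: "Lx (emb p) = of_int (fst p)" by (simp add: emb_E)
lemma Ly_emb[simp]: "Ly (emb p) = of_int (snd p)" by (simp add: emb_E)
lemma Lx_ed[simp]: "Lx (ed i) = of_int (fst (dir i))" by (simp add: ed_def)
lemma Ly_ed[simp]: "Ly (ed i) = of_int (snd (dir i))" by (simp add: ed_def)
lemma emb_nbr: "emb (nbr p i) = emb p + ed i"
  by (rule L_eq) (simp_all add: nbr_def)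

lemma dirs: "dir 0 = (1,0)" "dir (Suc 0) = (1,-1)" "dir 1 = (1,-1)" "dir 2 = (0,-1)" "dir 3 = (-1,0)" "dir 4 = (-1,1)" "dir 5 = (0,1)"
  "dir 6 = (1,0)" "dir (Suc 1) = (0,-1)" "dir (Suc 2) = (-1,0)" "dir (Suc 3) = (-1,1)"
  "dir (Suc 4) = (0,1)" "dir (Suc 5) = (1,0)" "dir (Suc (Suc 0)) = (0,-1)" "dir (Suc (Suc (Suc 0))) = (-1,0)"
  "dir (Suc (Suc (Suc (Suc 0)))) = (-1,1)" "dir (Suc (Suc (Suc (Suc (Suc 0))))) = (0,1)"
  "dir (Suc (Suc (Suc (Suc (Suc (Suc 0)))))) = (1,0)"
  by (simp_all add: dir_def)

lemma lt6: "(i::nat) < 6 \<Longrightarrow> i = 0 \<or> i = 1 \<or> i = 2 \<or> i = 3 \<or> i = 4 \<or> i = 5" by auto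

lemma int_small: "real_of_int k = x \<Longrightarrow> -2 < x \<Longrightarrow> x < 2 \<Longrightarrow> k = -1 \<or> k = 0 \<or> k = 1"
proof -
  assume "real_of_int k = x" "-2 < x" "x < 2"
  then have "-2 < k" "k < 2" by linarith+
  then show ?thesis by presburger
qed

lemma seg_seg:
  assumes "i < 6" "j < 6" "0 < t" "t < 1" "0 \<le> s" "s \<le> 1"
    and eq: "emb p + t *\<^sub>R ed i = emb p' + s *\<^sub>R ed j"
  shows "(p' = p \<and> nbr p' j = nbr p i) \<or> (p' = nbr p i \<and> nbr p' j = p)"
proof -
  obtain a b where p: "p = (a,b)" by (cases p)
  obtain a' b' where p': "p' = (a',b')" by (cases p')
  have e1: "of_int a + t * of_int (fst (dir i)) = of_int a' + s * of_int (fst (dir j))"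
    using arg_cong[OF eq, of Lx] by (simp add: p p')
  have e2: "of_int b + t * of_int (snd (dir i)) = of_int b' + s * of_int (snd (dir j))"
    using arg_cong[OF eq, of Ly] by (simp add: p p')
  have d: "fst (dir l) \<in> {-1,0,1} \<and> snd (dir l) \<in> {-1,0,1}" for l
  proof -
    have "l mod 6 < 6" by simp
    then show ?thesis using lt6[of "l mod 6"] by (auto simp: dir_def)
  qed
  have k1: "a' - a = -1 \<or> a' - a = 0 \<or> a' - a = 1"
    apply (rule int_small[of _ "t * of_int (fst (dir i)) - s * of_int (fst (dir j))"])
    using e1 d[of i] d[of j] assms by auto
  have k2: "b' - b = -1 \<or> b' - b = 0 \<or> b' - b = 1"
    apply (rule int_small[of _ "t * of_int (snd (dir i)) - s * of_int (snd (dir j))"])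
    using e2 d[of i] d[of j] assms by auto
  have a': "a' = a - 1 \<or> a' = a \<or> a' = a + 1" using k1 by auto
  have b': "b' = b - 1 \<or> b' = b \<or> b' = b + 1" using k2 by auto
  show ?thesis
    using lt6[OF assms(1)] lt6[OF assms(2)] a' b' e1 e2 assms(3-6)
    apply (simp add: p p' nbr_def)
    apply (elim disjE)
    apply (simp_all add: dirs)

    done
qed

lemma dir_range: "fst (dir l) \<in> {-1,0,1} \<and> snd (dir l) \<in> {-1,0,1}"
proof -
  have "l mod 6 < 6" by simp
  then show ?thesis using lt6[of "l mod 6"] by (auto simp: dir_def)
qed

lemma seg_pt:
  assumes "i < 6" "0 < t" "t < 1" and eq: "emb p + t *\<^sub>R ed i = emb q"
  shows False
proof -
  obtain a b where p: "p = (a,b)" by (cases p)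
  obtain a' b' where p': "q = (a',b')" by (cases q)
  have e1: "of_int a + t * of_int (fst (dir i)) = of_int a'"
    using arg_cong[OF eq, of Lx] by (simp add: p p')
  have e2: "of_int b + t * of_int (snd (dir i)) = of_int b'"
    using arg_cong[OF eq, of Ly] by (simp add: p p')
  have k1: "a' - a = -1 \<or> a' - a = 0 \<or> a' - a = 1"
    apply (rule int_small[of _ "t * of_int (fst (dir i))"])
    using e1 dir_range[of i] assms by auto
  have k2: "b' - b = -1 \<or> b' - b = 0 \<or> b' - b = 1"
    apply (rule int_small[of _ "t * of_int (snd (dir i))"])
    using e2 dir_range[of i] assms by auto
  have a': "a' = a - 1 \<or> a' = a \<or> a' = a + 1" using k1 by auto
  have b': "b' = b - 1 \<or> b' = b \<or> b' = b + 1" using k2 by auto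
  show ?thesis
    using lt6[OF assms(1)] a' b' e1 e2 assms(2-3)
    apply (elim disjE)
    apply (simp_all add: dirs)
    done
qed

lemma pt_lattice:
  assumes "j < 6" "0 \<le> s" "s \<le> 1" and eq: "emb q = emb p' + s *\<^sub>R ed j"
  shows "q = p' \<or> q = nbr p' j"
proof -
  obtain a b where p: "q = (a,b)" by (cases q)
  obtain a' b' where p': "p' = (a',b')" by (cases p')
  have e1: "of_int a = of_int a' + s * of_int (fst (dir j))"
    using arg_cong[OF eq, of Lx] by (simp add: p p')
  have e2: "of_int b = of_int b' + s * of_int (snd (dir j))"
    using arg_cong[OF eq, of Ly] by (simp add: p p')
  have k1: "a' - a = -1 \<or> a' - a = 0 \<or> a' - a = 1"
    apply (rule int_small[of _ "- s * of_int (fst (dir j))"])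
    using e1 dir_range[of j] assms by auto
  have k2: "b' - b = -1 \<or> b' - b = 0 \<or> b' - b = 1"
    apply (rule int_small[of _ "- s * of_int (snd (dir j))"])
    using e2 dir_range[of j] assms by auto
  have a': "a' = a - 1 \<or> a' = a \<or> a' = a + 1" using k1 by auto
  have b': "b' = b - 1 \<or> b' = b \<or> b' = b + 1" using k2 by auto
  show ?thesis
    using lt6[OF assms(1)] a' b' e1 e2 assms(2-3)
    apply (simp add: p p' nbr_def)
    apply (elim disjE)
    apply (simp_all add: dirs)
    done
qed




lemma int_gap: "(y::real) \<in> \<int> \<Longrightarrow> 0 < \<bar>y - of_int n\<bar> \<Longrightarrow> \<bar>y - of_int n\<bar> < 1 \<Longrightarrow> False"
proof -
  assume "y \<in> \<int>" "0 < \<bar>y - of_int n\<bar>" "\<bar>y - of_int n\<bar> < 1"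
  then obtain m where m: "y = of_int m" by (auto elim: Ints_cases)
  have "0 < \<bar>m - n\<bar>" "\<bar>m - n\<bar> < 1"
    using \<open>0 < \<bar>y - of_int n\<bar>\<close> \<open>\<bar>y - of_int n\<bar> < 1\<close> unfolding m
    by (metis of_int_0_less_iff of_int_abs of_int_diff, metis of_int_abs of_int_diff of_int_less_1_iff)
  then show False by linarith
qed

lemma drawing_line:
  assumes "j < 6" "z = emb p' + s *\<^sub>R ed j"
  shows "Lx z \<in> \<int> \<or> Ly z \<in> \<int> \<or> Lx z + Ly z \<in> \<int>"
  using lt6[OF assms(1)] assms(2)
  by (elim disjE) (simp_all add: dirs)

lemma tri_nonint:
  assumes "k < 6" "0 < \<alpha>" "0 < \<beta>" "\<alpha> + \<beta> < 1"
    and z: "z = emb p + \<alpha> *\<^sub>R ed k + \<beta> *\<^sub>R ed (Suc k)"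
  shows "Lx z \<notin> \<int> \<and> Ly z \<notin> \<int> \<and> Lx z + Ly z \<notin> \<int>"
proof -
  have x: "Lx z - of_int (fst p) = \<alpha> * of_int (fst (dir k)) + \<beta> * of_int (fst (dir (Suc k)))"
    using z by simp
  have y: "Ly z - of_int (snd p) = \<alpha> * of_int (snd (dir k)) + \<beta> * of_int (snd (dir (Suc k)))"
    using z by simp
  have xy: "Lx z + Ly z - of_int (fst p + snd p) = \<alpha> * of_int (fst (dir k) + snd (dir k)) + \<beta> * of_int (fst (dir (Suc k)) + snd (dir (Suc k)))"
    using z by (simp add: algebra_simps)
  have b1: "0 < \<bar>Lx z - of_int (fst p)\<bar> \<and> \<bar>Lx z - of_int (fst p)\<bar> < 1"
    unfolding x using lt6[OF assms(1)] assms(2-4) by (elim disjE) (simp_all add: dirs abs_if)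
  have b2: "0 < \<bar>Ly z - of_int (snd p)\<bar> \<and> \<bar>Ly z - of_int (snd p)\<bar> < 1"
    unfolding y using lt6[OF assms(1)] assms(2-4) by (elim disjE) (simp_all add: dirs abs_if)
  have b3: "0 < \<bar>Lx z + Ly z - of_int (fst p + snd p)\<bar> \<and> \<bar>Lx z + Ly z - of_int (fst p + snd p)\<bar> < 1"
    unfolding xy using lt6[OF assms(1)] assms(2-4) by (elim disjE) (simp_all add: dirs abs_if)
  show ?thesis using b1 b2 b3 int_gap by blast
qed

lemma tri_seg:
  assumes "k < 6" "j < 6" "0 < \<alpha>" "0 < \<beta>" "\<alpha> + \<beta> < 1"
    and eq: "emb p + \<alpha> *\<^sub>R ed k + \<beta> *\<^sub>R ed (Suc k) = emb p' + s *\<^sub>R ed j"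
  shows False
  using tri_nonint[OF assms(1,3-5) eq[symmetric]] drawing_line[OF assms(2) refl, of p' s] by blast



lemma nbr_mod: "nbr p (i mod 6) = nbr p i" by (simp add: nbr_def dir_def)
lemma ed_mod: "ed (i mod 6) = ed i" by (simp add: ed_def dir_def)
lemma adj_nbr: "i < 6 \<Longrightarrow> adj p (nbr p i)" by (auto simp: adj_def)

lemma dir_back: "dir (i + 3) = (- fst (dir i), - snd (dir i))"
proof -
  have "i mod 6 < 6" by simp
  moreover have "(i + 3) mod 6 = (i mod 6 + 3) mod 6" by (simp add: mod_add_left_eq)
  ultimately show ?thesis unfolding dir_def using lt6[of "i mod 6"] by auto
qed

lemma dir_next: "dir (Suc i) = (fst (dir i) + fst (dir (i+2)), snd (dir i) + snd (dir (i+2)))"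
proof -
  have "i mod 6 < 6" by simp
  moreover have "(i + 2) mod 6 = (i mod 6 + 2) mod 6" by (metis mod_add_left_eq)
  moreover have "(Suc i) mod 6 = (i mod 6 + 1) mod 6" by (simp add: mod_Suc_eq)
  ultimately show ?thesis unfolding dir_def using lt6[of "i mod 6"] by auto
qed

lemma nbr_back: "nbr (nbr p i) (i + 3) = p"
proof -
  have h1: "fst (dir (i + 3)) = - fst (dir i)" and h2: "snd (dir (i + 3)) = - snd (dir i)"
    using dir_back[of i] by (simp_all only: fst_conv snd_conv)
  show ?thesis unfolding nbr_def prod_eq_iff fst_conv snd_conv using h1 h2 by linarith
qed

lemma nbr_next: "nbr (nbr p i) (i + 2) = nbr p (Suc i)"
proof -
  have h1: "fst (dir (Suc i)) = fst (dir i) + fst (dir (i + 2))"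
    and h2: "snd (dir (Suc i)) = snd (dir i) + snd (dir (i + 2))"
    using dir_next[of i] by (simp_all only: fst_conv snd_conv)
  show ?thesis unfolding nbr_def prod_eq_iff fst_conv snd_conv using h1 h2 by linarith
qed

lemma adj_sym: "adj p q \<Longrightarrow> adj q p"
proof -
  assume "adj p q"
  then obtain i where "q = nbr p i" unfolding adj_def by blast
  then have "p = nbr q ((i + 3) mod 6)" by (simp add: nbr_mod nbr_back)
  then show ?thesis unfolding adj_def by (intro exI[of _ "(i + 3) mod 6"]) simp
qed

lemma adj_next: "adj (nbr p i) (nbr p (Suc i))"
proof -
  have "nbr (nbr p i) ((i + 2) mod 6) = nbr p (Suc i)" by (subst nbr_mod) (rule nbr_next)
  then have "nbr p (Suc i) = nbr (nbr p i) ((i + 2) mod 6)" by simp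
  then show ?thesis unfolding adj_def by (intro exI[of _ "(i + 2) mod 6"]) simp
qed

lemma emb_inj: "emb p = emb q \<Longrightarrow> p = q"
proof -
  assume h: "emb p = emb q"
  have "of_int (fst p) = (of_int (fst q) :: real)" using arg_cong[OF h, of Lx] by simp
  moreover have "of_int (snd p) = (of_int (snd q) :: real)" using arg_cong[OF h, of Ly] by simp
  ultimately show ?thesis by (simp add: prod_eq_iff)
qed

lemma seg_param: "emb p + s *\<^sub>R ed j \<in> closed_segment (emb p) (emb (nbr p j))" if "0 \<le> s" "s \<le> 1"
  unfolding in_segment emb_nbr using that
  by (intro exI[of _ s]) (simp add: algebra_simps)

lemma seg_drawn: "p \<in> S \<Longrightarrow> q \<in> S \<Longrightarrow> adj p q \<Longrightarrow> closed_segment (emb p) (emb q) \<subseteq> drawing S"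
  unfolding drawing_def by blast

lemma seg_in_drawing:
  "p \<in> S \<Longrightarrow> nbr p j \<in> S \<Longrightarrow> j < 6 \<Longrightarrow> 0 \<le> s \<Longrightarrow> s \<le> 1 \<Longrightarrow> emb p + s *\<^sub>R ed j \<in> drawing S"
  using seg_drawn[of p S "nbr p j"] adj_nbr[of j p] seg_param[of s p j] by blast

lemma drawing_cases:
  assumes "z \<in> drawing S"
  shows "(\<exists>q\<in>S. z = emb q) \<or> (\<exists>p\<in>S. \<exists>j<6. nbr p j \<in> S \<and> (\<exists>s. 0 \<le> s \<and> s \<le> 1 \<and> z = emb p + s *\<^sub>R ed j))"
proof -
  { assume "z \<notin> emb ` S"
    then obtain p q where pq: "p \<in> S" "q \<in> S" "adj p q" "z \<in> closed_segment (emb p) (emb q)"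
      using assms unfolding drawing_def by blast
    then obtain j where j: "j < 6" "q = nbr p j" unfolding adj_def by blast
    from pq(4) obtain u where u: "0 \<le> u" "u \<le> 1" "z = (1 - u) *\<^sub>R emb p + u *\<^sub>R emb q"
      unfolding in_segment by blast
    have "z = emb p + u *\<^sub>R ed j" using u(3) unfolding j emb_nbr by (simp add: algebra_simps)
    then have ?thesis using pq j u by blast }
  then show ?thesis by blast
qed

lemma G1: "emb q \<in> drawing S \<Longrightarrow> q \<in> S"
proof -
  assume "emb q \<in> drawing S"
  from drawing_cases[OF this] show ?thesis
  proof (elim disjE bexE exE conjE)
    fix q' assume "q' \<in> S" "emb q = emb q'"
    then show ?thesis using emb_inj by blast
  next
    fix p j s assume "p \<in> S" "j < 6" "nbr p j \<in> S" "0 \<le> s" "s \<le> 1" "emb q = emb p + s *\<^sub>R ed j"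
    then show ?thesis using pt_lattice[of j s q p] by blast
  qed
qed

lemma G2:
  assumes "j < 6" "0 < t" "t < 1" "p \<notin> S \<or> nbr p j \<notin> S"
  shows "emb p + t *\<^sub>R ed j \<notin> drawing S"
proof
  assume "emb p + t *\<^sub>R ed j \<in> drawing S"
  then consider q where "q \<in> S" "emb p + t *\<^sub>R ed j = emb q"
    | p' j' s where "p' \<in> S" "j' < 6" "nbr p' j' \<in> S" "0 \<le> s" "s \<le> 1" "emb p + t *\<^sub>R ed j = emb p' + s *\<^sub>R ed j'"
    using drawing_cases by blast
  then show False
  proof cases
    case 1 then show ?thesis using seg_pt assms by blast
  next
    case 2 then show ?thesis using seg_seg[OF assms(1) 2(2) assms(2,3) 2(4,5,6)] assms(4) by auto
  qed
qed

lemma G3: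
  assumes "k < 6" "0 < \<alpha>" "0 < \<beta>" "\<alpha> + \<beta> < 1"
  shows "emb p + \<alpha> *\<^sub>R ed k + \<beta> *\<^sub>R ed (Suc k) \<notin> drawing S"
proof
  assume "emb p + \<alpha> *\<^sub>R ed k + \<beta> *\<^sub>R ed (Suc k) \<in> drawing S"
  then consider q where "q \<in> S" "emb p + \<alpha> *\<^sub>R ed k + \<beta> *\<^sub>R ed (Suc k) = emb q"
    | p' j' s where "p' \<in> S" "j' < 6" "nbr p' j' \<in> S" "0 \<le> s" "s \<le> 1" "emb p + \<alpha> *\<^sub>R ed k + \<beta> *\<^sub>R ed (Suc k) = emb p' + s *\<^sub>R ed j'"
    using drawing_cases by blast
  then show False
  proof cases
    case 1 then show ?thesis using tri_seg[OF assms(1) _ assms(2-4), of 0 p q 0] by simp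
  next
    case 2 then show ?thesis using tri_seg[OF assms(1) 2(2) assms(2-4)] by blast
  qed
qed

lemma outer_sub: "x \<in> outer_face S \<Longrightarrow> x \<notin> drawing S"
proof
  assume "x \<in> outer_face S" "x \<in> drawing S"
  then have "connected_component_set (- drawing S) x = {}"
    using connected_component_eq_empty[of "- drawing S" x] by blast
  moreover have "\<not> bounded (connected_component_set (- drawing S) x)"
    using \<open>x \<in> outer_face S\<close> unfolding outer_face_def by simp
  ultimately show False by (metis bounded_empty)
qed

lemma seg_outer:
  assumes "closed_segment x y \<subseteq> - drawing S" "x \<in> outer_face S"
  shows "y \<in> outer_face S"
proof -
  have "closed_segment x y \<subseteq> connected_component_set (- drawing S) x"
    by (rule connected_component_maximal) (use assms(1) in auto)
  then have "y \<in> connected_component_set (- drawing S) x" by auto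
  then have "connected_component_set (- drawing S) y = connected_component_set (- drawing S) x"
    by (rule connected_component_eq)
  then show ?thesis using assms(2) unfolding outer_face_def by simp
qed

lemma seg_free1:
  assumes "j < 6" "nbr v j \<notin> S" "0 < t" "t \<le> 1"
  shows "closed_segment (emb v + t *\<^sub>R ed j) (emb (nbr v j)) \<subseteq> - drawing S"
proof
  fix y assume "y \<in> closed_segment (emb v + t *\<^sub>R ed j) (emb (nbr v j))"
  then obtain u where u: "0 \<le> u" "u \<le> 1" "y = (1 - u) *\<^sub>R (emb v + t *\<^sub>R ed j) + u *\<^sub>R emb (nbr v j)"
    unfolding in_segment by blast
  define t' where "t' = t + u * (1 - t)"
  have y: "y = emb v + t' *\<^sub>R ed j" unfolding u(3) t'_def emb_nbr by (simp add: algebra_simps)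
  have "0 \<le> u * (1 - t)" using u assms by simp
  then have t'0: "0 < t'" using assms unfolding t'_def by linarith
  have "t' = 1 - (1 - u) * (1 - t)" unfolding t'_def by (simp add: algebra_simps)
  moreover have "0 \<le> (1 - u) * (1 - t)" using u assms by simp
  ultimately have t'1: "t' \<le> 1" by linarith
  show "y \<in> - drawing S"
  proof (cases "t' = 1")
    case True
    then have "y = emb (nbr v j)" using y emb_nbr by simp
    then show ?thesis using G1 assms(2) by blast
  next
    case False
    then show ?thesis using G2[OF assms(1) t'0, of v S] t'1 assms(2) y by auto
  qed
qed

lemma seg_free2:
  assumes "i < 6" "p \<notin> S" "nbr p i \<notin> S"
  shows "closed_segment (emb p) (emb (nbr p i)) \<subseteq> - drawing S"
proof
  fix y assume "y \<in> closed_segment (emb p) (emb (nbr p i))"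
  then obtain u where u: "0 \<le> u" "u \<le> 1" "y = (1 - u) *\<^sub>R emb p + u *\<^sub>R emb (nbr p i)"
    unfolding in_segment by blast
  have y: "y = emb p + u *\<^sub>R ed i" unfolding u(3) emb_nbr by (simp add: algebra_simps)
  show "y \<in> - drawing S"
  proof (cases "u = 0 \<or> u = 1")
    case True
    then have "y = emb p \<or> y = emb (nbr p i)" using y emb_nbr by auto
    then show ?thesis using G1[of p S] G1[of "nbr p i" S] assms by auto
  next
    case False
    then show ?thesis using G2[OF assms(1), of u p S] u assms y by auto
  qed
qed

lemma tri_free:
  assumes "k < 6" "0 < \<alpha>" "0 < \<beta>" "\<alpha> + \<beta> < 1" "j = k \<or> j = Suc k" "nbr v j \<notin> S"
  shows "closed_segment (emb v + \<alpha> *\<^sub>R ed k + \<beta> *\<^sub>R ed (Suc k)) (emb (nbr v j)) \<subseteq> - drawing S"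
proof
  fix y assume "y \<in> closed_segment (emb v + \<alpha> *\<^sub>R ed k + \<beta> *\<^sub>R ed (Suc k)) (emb (nbr v j))"
  then obtain u where u: "0 \<le> u" "u \<le> 1" "y = (1 - u) *\<^sub>R (emb v + \<alpha> *\<^sub>R ed k + \<beta> *\<^sub>R ed (Suc k)) + u *\<^sub>R emb (nbr v j)"
    unfolding in_segment by blast
  show "y \<in> - drawing S"
  proof (cases "u = 1")
    case True
    then have "y = emb (nbr v j)" using u(3) by simp
    then show ?thesis using G1[of "nbr v j" S] assms(6) by auto
  next
    case False
    then have u1: "0 < 1 - u" using u by simp
    have p1: "0 < (1 - u) * \<alpha>" "0 < (1 - u) * \<beta>" using u1 assms by simp_all
    have p2: "(1 - u) * (\<alpha> + \<beta>) < (1 - u) * 1" using u1 assms by (intro mult_strict_left_mono) auto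
    from assms(5) show ?thesis
    proof
      assume j: "j = k"
      have "y = emb v + ((1 - u) * \<alpha> + u) *\<^sub>R ed k + ((1 - u) * \<beta>) *\<^sub>R ed (Suc k)"
        unfolding u(3) j emb_nbr by (simp add: algebra_simps)
      moreover have "emb v + ((1 - u) * \<alpha> + u) *\<^sub>R ed k + ((1 - u) * \<beta>) *\<^sub>R ed (Suc k) \<notin> drawing S"
        apply (rule G3[OF assms(1)]) using p1 p2 u by (auto simp: algebra_simps)
      ultimately show ?thesis by simp
    next
      assume j: "j = Suc k"
      have "y = emb v + ((1 - u) * \<alpha>) *\<^sub>R ed k + ((1 - u) * \<beta> + u) *\<^sub>R ed (Suc k)"
        unfolding u(3) j emb_nbr by (simp add: algebra_simps)
      moreover have "emb v + ((1 - u) * \<alpha>) *\<^sub>R ed k + ((1 - u) * \<beta> + u) *\<^sub>R ed (Suc k) \<notin> drawing S"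
        apply (rule G3[OF assms(1)]) using p1 p2 u by (auto simp: algebra_simps)
      ultimately show ?thesis by simp
    qed
  qed
qed



lemma adj_nbr': "adj p (nbr p i)"
  using adj_nbr[of "i mod 6" p] by (simp add: nbr_mod)

lemma hull_bounded:
  assumes "v \<in> S" "nbr v k \<in> S" "nbr v (Suc k) \<in> S" "0 \<le> \<alpha>" "0 \<le> \<beta>" "\<alpha> + \<beta> \<le> 1"
    and x: "x = emb v + \<alpha> *\<^sub>R ed k + \<beta> *\<^sub>R ed (Suc k)" and xd: "x \<notin> drawing S"
  shows "x \<notin> outer_face S"
proof
  assume xo: "x \<in> outer_face S"
  define A where "A = emb v"
  define B where "B = emb (nbr v k)"
  define C where "C = emb (nbr v (Suc k))"
  define T where "T = convex hull {A, B, C}"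
  have "x = (1 - \<alpha> - \<beta>) *\<^sub>R A + \<alpha> *\<^sub>R B + \<beta> *\<^sub>R C"
    unfolding x A_def B_def C_def emb_nbr by (simp add: algebra_simps)
  then have xT: "x \<in> T" unfolding T_def convex_hull_3 using assms(4-6)
    by (intro CollectI exI[of _ "1 - \<alpha> - \<beta>"] exI[of _ \<alpha>] exI[of _ \<beta>]) auto
  have fr: "frontier T \<subseteq> drawing S"
  proof -
    have "frontier T = closed_segment A B \<union> closed_segment B C \<union> closed_segment C A"
      unfolding T_def by (rule frontier_of_triangle) simp
    moreover have "closed_segment A B \<subseteq> drawing S"
      unfolding A_def B_def by (rule seg_drawn) (use assms adj_nbr' in auto)
    moreover have "closed_segment B C \<subseteq> drawing S"
      unfolding B_def C_def by (rule seg_drawn) (use assms adj_next in auto)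
    moreover have "closed_segment C A \<subseteq> drawing S"
      unfolding A_def C_def by (rule seg_drawn) (use assms adj_sym adj_nbr' in auto)
    ultimately show ?thesis by blast
  qed
  define K where "K = connected_component_set (- drawing S) x"
  have xK: "x \<in> K" unfolding K_def using xd by simp
  have KT: "K \<subseteq> T"
  proof (rule ccontr)
    assume "\<not> K \<subseteq> T"
    then have "K - T \<noteq> {}" by blast
    moreover have "K \<inter> T \<noteq> {}" using xK xT by blast
    moreover have "connected K" unfolding K_def by simp
    ultimately have "K \<inter> frontier T \<noteq> {}" using connected_Int_frontier by blast
    moreover have "K \<subseteq> - drawing S" unfolding K_def by (rule connected_component_subset)
    ultimately show False using fr by blast
  qed
  have "bounded T" unfolding T_def by (simp add: bounded_convex_hull finite_imp_bounded)
  then have "bounded K" using KT bounded_subset by blast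
  then show False using xo unfolding outer_face_def K_def by simp
qed

lemma spoke_out:
  assumes "v \<in> S" "j < 6" "0 < t" "t < 1" "x = emb v + t *\<^sub>R ed j" "x \<in> outer_face S"
  shows "nbr v j \<notin> S \<and> emb (nbr v j) \<in> outer_face S"
proof -
  have n: "nbr v j \<notin> S"
  proof
    assume "nbr v j \<in> S"
    then have "x \<in> drawing S" using seg_in_drawing[of v S j t] assms by auto
    then show False using outer_sub assms(6) by blast
  qed
  show ?thesis using n seg_outer[OF seg_free1[OF assms(2) n assms(3)]] assms by auto
qed

lemma sector_out:
  assumes "v \<in> S" "k < 6" "0 < \<alpha>" "0 < \<beta>" "\<alpha> + \<beta> < 1"
    "x = emb v + \<alpha> *\<^sub>R ed k + \<beta> *\<^sub>R ed (Suc k)" "x \<in> outer_face S"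
  shows "\<exists>j<6. nbr v j \<notin> S \<and> emb (nbr v j) \<in> outer_face S"
proof -
  have xd: "x \<notin> drawing S" using outer_sub assms(7) by blast
  consider "nbr v k \<notin> S" | "nbr v (Suc k) \<notin> S" | "nbr v k \<in> S" "nbr v (Suc k) \<in> S" by blast
  then show ?thesis
  proof cases
    case 1
    then have "emb (nbr v k) \<in> outer_face S"
      using seg_outer[OF tri_free[OF assms(2-5), of k v S]] assms by auto
    then show ?thesis using 1 assms(2) by blast
  next
    case 2
    then have "emb (nbr v (Suc k)) \<in> outer_face S"
      using seg_outer[OF tri_free[OF assms(2-5), of "Suc k" v S]] assms by auto
    then show ?thesis using 2 nbr_mod[of v "Suc k"]
      by (intro exI[of _ "Suc k mod 6"]) auto
  next
    case 3
    then have "x \<notin> outer_face S" using hull_bounded[OF assms(1) 3, of \<alpha> \<beta> x] assms xd by auto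
    then show ?thesis using assms(7) by blast
  qed
qed

lemma s3: "1 \<le> sqrt (3::real)" by simp

lemma Lx_bound: "\<bar>Lx d\<bar> \<le> 2 * cmod d"
proof -
  have "\<bar>Im d\<bar> / sqrt 3 \<le> \<bar>Im d\<bar>"
    using s3 by (simp add: pos_divide_le_eq mult_le_cancel_left1)
  moreover have "\<bar>Im d / sqrt 3\<bar> = \<bar>Im d\<bar> / sqrt 3" by (simp add: abs_divide)
  moreover have "\<bar>Re d - Im d / sqrt 3\<bar> \<le> \<bar>Re d\<bar> + \<bar>Im d / sqrt 3\<bar>" by (rule abs_triangle_ineq4)
  ultimately have "\<bar>Lx d\<bar> \<le> \<bar>Re d\<bar> + \<bar>Im d\<bar>" unfolding Lx_def by linarith
  moreover have "\<bar>Re d\<bar> \<le> cmod d" "\<bar>Im d\<bar> \<le> cmod d" by (simp_all add: abs_Re_le_cmod abs_Im_le_cmod)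
  ultimately show ?thesis by linarith
qed

lemma Ly_bound: "\<bar>Ly d\<bar> \<le> 2 * cmod d"
proof -
  have "\<bar>Im d\<bar> / sqrt 3 \<le> \<bar>Im d\<bar>"
    using s3 by (simp add: pos_divide_le_eq mult_le_cancel_left1)
  moreover have "\<bar>Ly d\<bar> = 2 * (\<bar>Im d\<bar> / sqrt 3)" unfolding Ly_def by (simp add: abs_divide abs_mult)
  moreover have "\<bar>Im d\<bar> \<le> cmod d" by (simp add: abs_Im_le_cmod)
  ultimately show ?thesis by linarith
qed



lemma near_v:
  assumes vS: "v \<in> S" and cl: "emb v \<in> closure (outer_face S)"
  shows "\<exists>j<6. nbr v j \<notin> S \<and> emb (nbr v j) \<in> outer_face S"
proof -
  obtain x where xo: "x \<in> outer_face S" and dx: "dist x (emb v) < 1/8"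
    using cl[unfolded closure_approachable, rule_format, of "1/8"] by auto
  define u where "u = Lx x - of_int (fst v)"
  define w where "w = Ly x - of_int (snd v)"
  have lx: "Lx x = of_int (fst v) + u" and ly: "Ly x = of_int (snd v) + w"
    unfolding u_def w_def by simp_all
  have nd: "cmod (x - emb v) < 1/8" using dx by (simp add: dist_norm)
  have "\<bar>u\<bar> \<le> 2 * cmod (x - emb v)" using Lx_bound[of "x - emb v"] unfolding u_def by simp
  then have u1: "-1/4 < u" "u < 1/4" using nd by linarith+
  have "\<bar>w\<bar> \<le> 2 * cmod (x - emb v)" using Ly_bound[of "x - emb v"] unfolding w_def by simp
  then have w1: "-1/4 < w" "w < 1/4" using nd by linarith+
  have sp: "\<exists>j<6. nbr v j \<notin> S \<and> emb (nbr v j) \<in> outer_face S"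
    if "j < 6" "0 < t" "t < 1" "Lx x = of_int (fst v) + t * of_int (fst (dir j))"
      "Ly x = of_int (snd v) + t * of_int (snd (dir j))" for j t
  proof -
    have "x = emb v + t *\<^sub>R ed j" by (rule L_eq) (simp_all add: that)
    then show ?thesis using spoke_out[OF vS that(1-3) _ xo] that(1) by blast
  qed
  have sc: "\<exists>j<6. nbr v j \<notin> S \<and> emb (nbr v j) \<in> outer_face S"
    if "k < 6" "0 < \<alpha>" "0 < \<beta>" "\<alpha> + \<beta> < 1"
      "Lx x = of_int (fst v) + \<alpha> * of_int (fst (dir k)) + \<beta> * of_int (fst (dir (Suc k)))"
      "Ly x = of_int (snd v) + \<alpha> * of_int (snd (dir k)) + \<beta> * of_int (snd (dir (Suc k)))" for k \<alpha> \<beta>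
  proof -
    have "x = emb v + \<alpha> *\<^sub>R ed k + \<beta> *\<^sub>R ed (Suc k)" by (rule L_eq) (simp_all add: that)
    then show ?thesis using sector_out[OF vS that(1-4) _ xo] by blast
  qed
  have xv: "x \<noteq> emb v" using xo outer_sub[of x S] vS unfolding drawing_def by auto
  show ?thesis
  proof (rule linorder_cases[of u 0])
    assume u: "u < 0"
    show ?thesis
    proof (rule linorder_cases[of w 0])
      assume w: "w < 0"
      show ?thesis by (rule sc[of 2 "-w" "-u"]) (use u w u1 w1 in \<open>simp_all add: dirs lx ly\<close>)
    next
      assume w: "w = 0"
      show ?thesis by (rule sp[of 3 "-u"]) (use u w u1 w1 in \<open>simp_all add: dirs lx ly\<close>)
    next
      assume w: "0 < w"
      show ?thesis
      proof (rule linorder_cases[of "u + w" 0])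
        assume uw: "u + w < 0"
        show ?thesis by (rule sc[of 3 "-u-w" w]) (use u w uw u1 w1 in \<open>simp_all add: dirs lx ly\<close>)
      next
        assume uw: "u + w = 0"
        show ?thesis by (rule sp[of 4 "-u"]) (use u w uw u1 w1 in \<open>simp_all add: dirs lx ly\<close>)
      next
        assume uw: "0 < u + w"
        show ?thesis by (rule sc[of 4 "-u" "u+w"]) (use u w uw u1 w1 in \<open>simp_all add: dirs lx ly\<close>)
      qed
    qed
  next
    assume u: "u = 0"
    show ?thesis
    proof (rule linorder_cases[of w 0])
      assume w: "w < 0"
      show ?thesis by (rule sp[of 2 "-w"]) (use u w u1 w1 in \<open>simp_all add: dirs lx ly\<close>)
    next
      assume w: "w = 0"
      have "x = emb v" by (rule L_eq) (simp_all add: lx ly u w)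
      then show ?thesis using xv by blast
    next
      assume w: "0 < w"
      show ?thesis by (rule sp[of 5 w]) (use u w u1 w1 in \<open>simp_all add: dirs lx ly\<close>)
    qed
  next
    assume u: "0 < u"
    show ?thesis
    proof (rule linorder_cases[of w 0])
      assume w: "w < 0"
      show ?thesis
      proof (rule linorder_cases[of "u + w" 0])
        assume uw: "u + w < 0"
        show ?thesis by (rule sc[of 1 u "-u-w"]) (use u w uw u1 w1 in \<open>simp_all add: dirs lx ly\<close>)
      next
        assume uw: "u + w = 0"
        show ?thesis by (rule sp[of 1 u]) (use u w uw u1 w1 in \<open>simp_all add: dirs lx ly\<close>)
      next
        assume uw: "0 < u + w"
        show ?thesis by (rule sc[of 0 "u+w" "-w"]) (use u w uw u1 w1 in \<open>simp_all add: dirs lx ly\<close>)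
      qed
    next
      assume w: "w = 0"
      show ?thesis by (rule sp[of 0 u]) (use u w u1 w1 in \<open>simp_all add: dirs lx ly\<close>)
    next
      assume w: "0 < w"
      show ?thesis by (rule sc[of 5 w u]) (use u w u1 w1 in \<open>simp_all add: dirs lx ly\<close>)
    qed
  qed
qed

lemma ob_from_nbr:
  assumes vS: "v \<in> S" and j: "j < 6" and n: "nbr v j \<notin> S" and o: "emb (nbr v j) \<in> outer_face S"
  shows "v \<in> outer_boundary S"
proof -
  have "emb v \<in> closure (outer_face S)"
    unfolding closure_approachable
  proof (intro allI impI)
    fix e :: real assume e: "0 < e"
    define c where "c = cmod (ed j)"
    define t where "t = min (1/2) (e / (c + 1))"
    have c0: "0 \<le> c" unfolding c_def by simp
    have t0: "0 < t" unfolding t_def using e c0 by simp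
    have t1: "t \<le> 1" unfolding t_def by simp
    have "t * c \<le> e / (c + 1) * c" unfolding t_def using c0 by (intro mult_right_mono) auto
    also have "\<dots> < e" using e c0 by (simp add: field_simps)
    finally have tc: "t * c < e" .
    have "emb v + t *\<^sub>R ed j \<in> outer_face S"
      using seg_outer[of "emb (nbr v j)" "emb v + t *\<^sub>R ed j" S] seg_free1[OF j n t0 t1] o
      by (simp add: closed_segment_commute)
    moreover have "dist (emb v + t *\<^sub>R ed j) (emb v) = t * c"
      unfolding c_def dist_norm using t0 by simp
    ultimately show "\<exists>y\<in>outer_face S. dist y (emb v) < e" using tc by metis
  qed
  moreover have "emb v \<notin> interior (outer_face S)"
    using interior_subset[of "outer_face S"] outer_sub[of "emb v" S] vS unfolding drawing_def by auto
  ultimately show ?thesis unfolding outer_boundary_def frontier_def using vS by simp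
qed

lemma prop_outer:
  assumes "nbr v j \<notin> S" "nbr v (Suc j) \<notin> S"
  shows "emb (nbr v j) \<in> outer_face S \<longleftrightarrow> emb (nbr v (Suc j)) \<in> outer_face S"
proof -
  have e: "nbr (nbr v j) ((j + 2) mod 6) = nbr v (Suc j)" by (simp only: nbr_mod nbr_next)
  have "closed_segment (emb (nbr v j)) (emb (nbr v (Suc j))) \<subseteq> - drawing S"
    using seg_free2[of "(j + 2) mod 6" "nbr v j" S] assms unfolding e by simp
  then show ?thesis using seg_outer[of _ _ S] by (metis closed_segment_commute)
qed



definition cyc :: "nat \<Rightarrow> nat \<Rightarrow> bool" where
  "cyc x y \<longleftrightarrow> y = Suc x mod 6 \<or> x = Suc y mod 6"

definition RN :: "nat set \<Rightarrow> (nat \<times> nat) set" where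
  "RN N = {(x, y). x \<in> N \<and> y \<in> N \<and> cyc x y}"

definition carc :: "nat \<Rightarrow> nat \<Rightarrow> nat set" where
  "carc t m = {(t + j) mod 6 | j. j < m}"

definition off :: "nat \<Rightarrow> nat \<Rightarrow> nat" where
  "off t i = (i + 6 - t mod 6) mod 6"

lemma off_inv: assumes "i < 6" shows "(s + off s i) mod 6 = i"
proof -
  have r: "s mod 6 < 6" by simp
  have "(s + off s i) mod 6 = (s mod 6 + off s i) mod 6" by (simp add: mod_add_left_eq)
  then show ?thesis unfolding off_def using lt6[OF r] lt6[OF assms] by (elim disjE) simp_all
qed

lemma off_arc: assumes "j < 6" shows "off s ((s + j) mod 6) = j"
proof -
  have r: "s mod 6 < 6" by simp
  have "(s + j) mod 6 = (s mod 6 + j) mod 6" by (simp add: mod_add_left_eq)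
  then show ?thesis unfolding off_def using lt6[OF r] lt6[OF assms] by (elim disjE) simp_all
qed

lemma off_compl: assumes "i < 6" "k < 6" shows "(\<not> off s i < k) \<longleftrightarrow> off (s + k) i < 6 - k"
proof -
  have r: "s mod 6 < 6" by simp
  have "(s + k) mod 6 = (s mod 6 + k) mod 6" by (simp add: mod_add_left_eq)
  then show ?thesis unfolding off_def using lt6[OF r] lt6[OF assms(1)] lt6[OF assms(2)] by (elim disjE) simp_all
qed

lemma p1: "(f::nat) < 6 \<Longrightarrow> n < 6 \<Longrightarrow> (f + 5 * (f + 6 - n)) mod 6 = n"
  by (drule lt6, drule lt6, elim disjE, simp_all)
lemma p2: assumes "(x::nat) < 6" "y < 6" "y = Suc x mod 6 \<or> x = Suc y mod 6"
  shows "off s y = (off s x + 1) mod 6 \<or> off s x = (off s y + 1) mod 6"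
proof -
  have r: "s mod 6 < 6" by simp
  show ?thesis unfolding off_def using lt6[OF r] lt6[OF assms(1)] lt6[OF assms(2)] assms(3) by (elim disjE) simp_all
qed

lemma off_lt: "off s i < 6" unfolding off_def by simp

lemma carc_mem: "m \<le> 6 \<Longrightarrow> i \<in> carc t m \<longleftrightarrow> i < 6 \<and> off t i < m"
proof
  assume "m \<le> 6" "i \<in> carc t m"
  then obtain j where "j < m" "i = (t + j) mod 6" unfolding carc_def by blast
  then show "i < 6 \<and> off t i < m" using off_arc[of j t] \<open>m \<le> 6\<close> by simp
next
  assume "m \<le> 6" "i < 6 \<and> off t i < m"
  then show "i \<in> carc t m" unfolding carc_def using off_inv[of i t] by force
qed

lemma cyclic_arc: "cyclic_interval I \<longleftrightarrow> (\<exists>s<6. \<exists>k. 1 \<le> k \<and> k \<le> 6 \<and> I = carc s k)"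
  by (simp add: cyclic_interval_def carc_def)

lemma carc_sub: "carc t m \<subseteq> {0..<6}" unfolding carc_def by auto

lemma arc6: "carc t 6 = {0..<6}"
  using carc_mem[of 6 _ t] off_lt by auto

lemma cyc_sym: "cyc x y \<Longrightarrow> cyc y x" unfolding cyc_def by blast

lemma sym_RN: "sym (RN N)" unfolding RN_def sym_def using cyc_sym by blast

lemma RN_star_sym: "(x, y) \<in> (RN N)\<^sup>* \<Longrightarrow> (y, x) \<in> (RN N)\<^sup>*"
  using sym_rtrancl[OF sym_RN[of N]] unfolding sym_def by blast

lemma carc_conn:
  assumes "1 \<le> m" "m \<le> 6" "i \<in> carc t m" "j \<in> carc t m"
  shows "(i, j) \<in> (RN (carc t m))\<^sup>*"
proof -
  have base: "(t mod 6, (t + l) mod 6) \<in> (RN (carc t m))\<^sup>*" if "l < m" for l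
    using that
  proof (induction l)
    case 0 then show ?case by simp
  next
    case (Suc l)
    have "(t + l) mod 6 \<in> carc t m"
      unfolding carc_def using Suc.prems by (intro CollectI exI[of _ l] conjI) simp_all
    moreover have "(t + Suc l) mod 6 \<in> carc t m"
      unfolding carc_def using Suc.prems by (intro CollectI exI[of _ "Suc l"] conjI) simp_all
    moreover have "cyc ((t + l) mod 6) ((t + Suc l) mod 6)" unfolding cyc_def by (simp add: mod_Suc_eq)
    ultimately have "((t + l) mod 6, (t + Suc l) mod 6) \<in> RN (carc t m)" unfolding RN_def by simp
    then show ?case using Suc by (meson Suc_lessD rtrancl_into_rtrancl)
  qed
  obtain a where a: "a < m" "i = (t + a) mod 6" using assms(3) unfolding carc_def by blast
  obtain b where b: "b < m" "j = (t + b) mod 6" using assms(4) unfolding carc_def by blast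
  have "(i, t mod 6) \<in> (RN (carc t m))\<^sup>*" using RN_star_sym base[OF a(1)] a(2) by blast
  then show ?thesis using base[OF b(1)] b(2) by (meson rtrancl_trans)
qed

lemma compl_arc:
  assumes "1 \<le> k" "k < 6"
  shows "{0..<6} - carc s k = carc (s + k) (6 - k)"
proof -
  have "i < 6 \<Longrightarrow> (\<not> off s i < k) \<longleftrightarrow> off (s + k) i < 6 - k" for i
    using assms off_compl by blast
  then show ?thesis using carc_mem[of k _ s] carc_mem[of "6 - k" _ "s + k"] assms by auto
qed

definition cycconn :: "nat set \<Rightarrow> bool" where
  "cycconn N \<longleftrightarrow> (\<forall>i\<in>N. \<forall>j\<in>N. (i, j) \<in> (RN N)\<^sup>*)"

lemma K1:
  assumes "cyclic_interval F" "F \<noteq> {0..<6}"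
  shows "cycconn ({0..<6} - F)"
proof -
  obtain s k where sk: "s < 6" "1 \<le> k" "k \<le> 6" "F = carc s k" using assms(1) cyclic_arc by blast
  have "k \<noteq> 6" using assms(2) sk arc6 by auto
  then have eq: "{0..<6} - F = carc (s + k) (6 - k)" using compl_arc[of k s] sk by simp
  have m1: "1 \<le> 6 - k" "6 - k \<le> (6::nat)" using sk \<open>k \<noteq> 6\<close> by auto
  show ?thesis unfolding cycconn_def eq
    by (intro ballI) (rule carc_conn[OF m1])
qed

lemma K2:
  assumes NF: "N \<subseteq> {0..<6}" "F = {0..<6} - N" and Nne: "N \<noteq> {}" and Fne: "F \<noteq> {}"
    and cc: "cycconn N"
  shows "cyclic_interval F"
proof -
  have inF: "i < 6 \<Longrightarrow> i \<notin> N \<Longrightarrow> i \<in> F" for i using NF by auto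
  have "\<exists>s<6. s \<in> F \<and> (s + 5) mod 6 \<in> N"
  proof (rule ccontr)
    assume H: "\<not> ?thesis"
    obtain f where f: "f \<in> F" using Fne by blast
    have f6: "f < 6" using f NF by auto
    have P: "(f + 5 * j) mod 6 \<in> F" for j
    proof (induction j)
      case 0 then show ?case using f f6 by simp
    next
      case (Suc j)
      have h: "f + 5 * Suc j = (f + 5 * j) + 5" by simp
      have e: "(f + 5 * Suc j) mod 6 = ((f + 5 * j) mod 6 + 5) mod 6"
        unfolding h by (rule mod_add_left_eq[symmetric])
      have "(f + 5 * j) mod 6 < 6" by simp
      then have "((f + 5 * j) mod 6 + 5) mod 6 \<notin> N" using H Suc by blast
      then show ?case unfolding e using inF by simp
    qed
    obtain n where n: "n \<in> N" using Nne by blast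
    have n6: "n < 6" using n NF by auto
    have "(f + 5 * (f + 6 - n)) mod 6 = n" using f6 n6 by (rule p1)
    then have "n \<in> F" using P[of "f + 6 - n"] by simp
    then show False using n NF by auto
  qed
  then obtain s where s: "s < 6" "s \<in> F" "(s + 5) mod 6 \<in> N" by blast
  define k where "k = (LEAST m. (s + m) mod 6 \<in> N)"
  have kN: "(s + k) mod 6 \<in> N" unfolding k_def by (rule LeastI[of _ 5]) (use s in simp)
  have k5: "k \<le> 5" unfolding k_def by (rule Least_le) (use s in simp)
  have k0: "k \<noteq> 0" using kN s NF by auto
  have below: "m < k \<Longrightarrow> (s + m) mod 6 \<in> F" for m
    using not_less_Least[of m "\<lambda>m. (s + m) mod 6 \<in> N"] inF unfolding k_def[symmetric] by simp
  have arcF: "carc s k \<subseteq> F" unfolding carc_def using below by blast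
  have Farc: "F \<subseteq> carc s k"
  proof
    fix t assume tF: "t \<in> F"
    have t6: "t < 6" using tF NF by auto
    show "t \<in> carc s k"
    proof (rule ccontr)
      assume "t \<notin> carc s k"
      then have kT: "k \<le> off s t" using carc_mem[of k t s] k5 t6 by simp
      define T where "T = off s t"
      have tT: "(s + T) mod 6 = t" unfolding T_def using off_inv t6 by simp
      have "T \<noteq> k" using tT kN tF NF by auto
      then have kT': "k < T" using kT T_def by simp
      have T5: "T \<le> 5" unfolding T_def using off_lt[of s t] by simp
      define X where "X = {i. i < 6 \<and> k \<le> off s i \<and> off s i < T}"
      have aX: "(s + k) mod 6 \<in> X" unfolding X_def using off_arc[of k s] k5 kT' by simp
      have bX: "(s + 5) mod 6 \<notin> X" unfolding X_def using off_arc[of 5 s] T5 by simp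
      have step: "y \<in> X" if xX: "x \<in> X" and xy: "(x, y) \<in> RN N" for x y
      proof -
        have xN: "x \<in> N" and yN: "y \<in> N" and cxy: "cyc x y" using xy unfolding RN_def by auto
        have x6: "x < 6" and y6: "y < 6" using xN yN NF by auto
        have "off s y = (off s x + 1) mod 6 \<or> off s x = (off s y + 1) mod 6"
          using cxy x6 y6 unfolding cyc_def by (intro p2) auto
        moreover have ox: "k \<le> off s x" "off s x < T" using xX unfolding X_def by auto
        moreover have "off s y < 6" by (rule off_lt)
        moreover have ab: "b = a + 1 \<or> a = b + 1" if "b = (a + 1) mod 6 \<or> a = (b + 1) mod 6"
          "1 \<le> a" "a < 5" "b < 6" for a b :: nat
        proof -
          have "(a + 1) mod 6 = a + 1" using that(3) by simp
          moreover have "b \<noteq> 5 \<Longrightarrow> (b + 1) mod 6 = b + 1" using that(4) by simp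
          moreover have "b = 5 \<Longrightarrow> (b + 1) mod 6 = 0" by simp
          ultimately show ?thesis using that(1,2) by (cases "b = 5") auto
        qed
        ultimately consider "off s y = off s x + 1" | "off s x = off s y + 1"
          using T5 k0 ab[of "off s y" "off s x"] by fastforce
        then show ?thesis
        proof cases
          case 1
          show ?thesis
          proof (cases "off s y = T")
            case True
            then have "y = t" using off_inv[OF y6, of s] tT by simp
            then show ?thesis using yN tF NF by auto
          next
            case False
            then show ?thesis unfolding X_def using 1 ox y6 by simp
          qed
        next
          case 2
          show ?thesis
          proof (cases "off s y < k")
            case True
            then have "(s + off s y) mod 6 \<in> F" by (rule below)
            then show ?thesis using off_inv[OF y6, of s] yN NF by auto
          next
            case False
            then show ?thesis unfolding X_def using 2 ox y6 by simp
          qed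
        qed
      qed
      have "((s + k) mod 6, (s + 5) mod 6) \<in> (RN N)\<^sup>*" using cc kN s(3) unfolding cycconn_def by blast
      then have "(s + 5) mod 6 \<in> X"
        by (induction rule: rtrancl_induct) (use aX step in auto)
      then show False using bX by simp
    qed
  qed
  have "F = carc s k" using arcF Farc by blast
  moreover have "1 \<le> k" "k \<le> 6" using k0 k5 by auto
  ultimately show ?thesis unfolding cyclic_arc using s(1) by blast
qed



lemma ex6: "(\<exists>l<6. P l) \<longleftrightarrow> P 0 \<or> P 1 \<or> P 2 \<or> P 3 \<or> P 4 \<or> P (5::nat)"
proof
  assume "\<exists>l<6. P l"
  then obtain l where "l < 6" "P l" by blast
  then show "P 0 \<or> P 1 \<or> P 2 \<or> P 3 \<or> P 4 \<or> P 5" using lt6[of l] by auto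
next
  assume "P 0 \<or> P 1 \<or> P 2 \<or> P 3 \<or> P 4 \<or> P 5"
  moreover have "(0::nat) < 6" "(1::nat) < 6" "(2::nat) < 6" "(3::nat) < 6" "(4::nat) < 6" "(5::nat) < 6"
    by simp_all
  ultimately show "\<exists>l<6. P l" by blast
qed

lemma adj_nbr_iff:
  assumes "i < 6" "j < 6"
  shows "adj (nbr v i) (nbr v j) \<longleftrightarrow> cyc i j"
  unfolding adj_def ex6 cyc_def using lt6[OF assms(1)] lt6[OF assms(2)]
  by (elim disjE) (simp_all add: nbr_def dirs prod_eq_iff)

lemma nbr_inj:
  assumes "i < 6" "j < 6" "nbr v i = nbr v j"
  shows "i = j"
  using lt6[OF assms(1)] lt6[OF assms(2)] assms(3)
  by (elim disjE) (simp_all add: nbr_def dirs prod_eq_iff)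

lemma transfer1:
  assumes "(i, j) \<in> (RN N)\<^sup>*" "N \<subseteq> {0..<6}"
  shows "(nbr v i, nbr v j) \<in> {(x, y). x \<in> nbr v ` N \<and> y \<in> nbr v ` N \<and> adj x y}\<^sup>*"
  using assms(1)
proof (induction rule: rtrancl_induct)
  case base then show ?case by simp
next
  case (step y z)
  then have "y \<in> N" "z \<in> N" "cyc y z" unfolding RN_def by auto
  moreover then have "y < 6" "z < 6" using assms(2) by auto
  ultimately have "adj (nbr v y) (nbr v z)" using adj_nbr_iff[of y z v] by simp
  moreover have "y \<in> N" "z \<in> N" using step unfolding RN_def by auto
  ultimately show ?case using step.IH by (auto intro: rtrancl_into_rtrancl)
qed

lemma transfer2:
  assumes "(x, y) \<in> {(x, y). x \<in> nbr v ` N \<and> y \<in> nbr v ` N \<and> adj x y}\<^sup>*"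
    "x = nbr v i" "i \<in> N" "N \<subseteq> {0..<6}"
  shows "\<exists>j\<in>N. y = nbr v j \<and> (i, j) \<in> (RN N)\<^sup>*"
  using assms(1)
proof (induction rule: rtrancl_induct)
  case base then show ?case using assms by auto
next
  case (step y z)
  from step.IH obtain j where j: "j \<in> N" "y = nbr v j" "(i, j) \<in> (RN N)\<^sup>*" by blast
  from step.hyps(2) obtain l where l: "l \<in> N" "z = nbr v l" "adj y z" by auto
  have "j < 6" "l < 6" using assms(4) j l by auto
  then have "cyc j l" using adj_nbr_iff[of j l v] l j by auto
  then have "(j, l) \<in> RN N" unfolding RN_def using j l by auto
  then have "(i, l) \<in> (RN N)\<^sup>*" using j(3) by (rule rtrancl_into_rtrancl[rotated])
  then show ?case using l by blast
qed

lemma grid_iff: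
  assumes "N \<subseteq> {0..<6}"
  shows "grid_connected (nbr v ` N) \<longleftrightarrow> cycconn N"
proof
  assume g: "grid_connected (nbr v ` N)"
  show "cycconn N" unfolding cycconn_def
  proof (intro ballI)
    fix i j assume ij: "i \<in> N" "j \<in> N"
    then have "(nbr v i, nbr v j) \<in> {(x, y). x \<in> nbr v ` N \<and> y \<in> nbr v ` N \<and> adj x y}\<^sup>*"
      using g unfolding grid_connected_def by auto
    then obtain j' where "j' \<in> N" "nbr v j = nbr v j'" "(i, j') \<in> (RN N)\<^sup>*"
      using transfer2[OF _ refl ij(1) assms] by blast
    moreover then have "j < 6" "j' < 6" using ij assms by auto
    ultimately have "j = j'" using nbr_inj[of j j' v] by auto
    moreover note \<open>(i, j') \<in> (RN N)\<^sup>*\<close>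
    ultimately show "(i, j) \<in> (RN N)\<^sup>*" by simp
  qed
next
  assume c: "cycconn N"
  show "grid_connected (nbr v ` N)" unfolding grid_connected_def
    using c transfer1[OF _ assms] unfolding cycconn_def by blast
qed

lemma prop_arc:
  assumes "carc s k \<subseteq> {i. nbr v i \<notin> S}" "m < k"
  shows "emb (nbr v ((s + m) mod 6)) \<in> outer_face S \<longleftrightarrow> emb (nbr v (s mod 6)) \<in> outer_face S"
  using assms(2)
proof (induction m)
  case 0 then show ?case by simp
next
  case (Suc m)
  have a: "(s + m) mod 6 \<in> carc s k"
    unfolding carc_def using Suc.prems by (intro CollectI exI[of _ m] conjI) simp_all
  have a2: "(s + Suc m) mod 6 \<in> carc s k"
    unfolding carc_def using Suc.prems by (intro CollectI exI[of _ "Suc m"] conjI) simp_all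
  have e: "nbr v (Suc ((s + m) mod 6)) = nbr v ((s + Suc m) mod 6)"
    by (metis nbr_mod mod_Suc_eq add_Suc_right)
  have "emb (nbr v ((s + m) mod 6)) \<in> outer_face S \<longleftrightarrow> emb (nbr v (Suc ((s + m) mod 6))) \<in> outer_face S"
    by (rule prop_outer) (use a a2 assms(1) e in auto)
  then show ?case using Suc e by simp
qed


theorem proposition2p2:
  fixes S :: "point set" and v :: point
  assumes "connected_shape S" and "card S \<ge> 2" and "v \<in> S"
  shows "erodable S v \<longleftrightarrow>
           (\<exists>B. (\<forall>B'. local_boundary S v B' \<longleftrightarrow> B' = B) \<and> local_outer_boundary S v B)"
proof -
  note vS = assms(3)
  define N where "N = {i. i < 6 \<and> nbr v i \<in> S}"
  define F where "F = {0..<6} - N"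
  have NF: "N \<subseteq> {0..<6}" unfolding N_def by auto
  have F_iff: "i \<in> F \<longleftrightarrow> i < 6 \<and> nbr v i \<notin> S" for i unfolding F_def N_def by auto
  have fin: "finite S" and gc: "grid_connected S" using assms(1) unfolding connected_shape_def by auto
  have Nne: "N \<noteq> {}"
  proof -
    obtain q where q: "q \<in> S" "q \<noteq> v"
    proof (rule ccontr)
      assume "\<not> thesis"
      then have "S \<subseteq> {v}" using that by blast
      then have "card S \<le> card {v}" by (intro card_mono) simp_all
      then have "card S \<le> 1" by simp
      then show False using assms(2) by simp
    qed
    have "(v, q) \<in> {(x, y). x \<in> S \<and> y \<in> S \<and> adj x y}\<^sup>*" using gc vS q unfolding grid_connected_def by blast
    then obtain y where "(v, y) \<in> {(x, y). x \<in> S \<and> y \<in> S \<and> adj x y}"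
      using q(2) by (blast elim: converse_rtranclE)
    then have "y \<in> S" "adj v y" by auto
    then obtain l where "l < 6" "y = nbr v l" unfolding adj_def by blast
    then have "l \<in> N" unfolding N_def using \<open>y \<in> S\<close> by auto
    then show ?thesis by blast
  qed
  have ci_sub: "cyclic_interval I \<Longrightarrow> I \<subseteq> {0..<6}" for I using cyclic_arc carc_sub by blast
  have free_iff: "free_interval S v I \<longleftrightarrow> cyclic_interval I \<and> I \<subseteq> F" for I
  proof -
    have "cyclic_interval I \<Longrightarrow> (\<forall>i\<in>I. nbr v i \<notin> S) \<longleftrightarrow> I \<subseteq> F"
      using ci_sub[of I] F_iff by auto
    then show ?thesis unfolding free_interval_def by auto
  qed
  have lb_iff: "local_boundary S v B \<longleftrightarrow> cyclic_interval B \<and> B \<subseteq> F \<and>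
      (\<forall>J. cyclic_interval J \<and> J \<subseteq> F \<and> B \<subseteq> J \<longrightarrow> J = B)" for B
    unfolding local_boundary_def free_iff by (simp add: conj_assoc)
  have nbrs: "{q \<in> S. adj v q} = nbr v ` N" unfolding N_def adj_def by auto
  have red_iff: "redundant S v \<longleftrightarrow> cycconn N"
    unfolding redundant_def nbrs using grid_iff[OF NF, of v] vS by simp
  have NF2: "{0..<6} - F = N" unfolding F_def using NF by auto
  show ?thesis
  proof
    assume er: "erodable S v"
    then have cc: "cycconn N" using red_iff unfolding erodable_def by simp
    have "emb v \<in> closure (outer_face S)"
      using er unfolding erodable_def outer_boundary_def frontier_def by simp
    then obtain j0 where j0: "j0 < 6" "nbr v j0 \<notin> S" "emb (nbr v j0) \<in> outer_face S"
      using near_v[OF vS] by blast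
    have j0F: "j0 \<in> F" using j0 F_iff by simp
    have ciF: "cyclic_interval F"
      by (rule K2[OF NF F_def Nne _ cc]) (use j0F in blast)
    have uniq: "local_boundary S v B' \<longleftrightarrow> B' = F" for B'
    proof
      assume "local_boundary S v B'"
      then show "B' = F" using lb_iff ciF by blast
    next
      assume "B' = F"
      then show "local_boundary S v B'" using lb_iff ciF by blast
    qed
    obtain s k where sk: "s < 6" "1 \<le> k" "k \<le> 6" "F = carc s k" using ciF cyclic_arc by blast
    have Fs: "carc s k \<subseteq> {i. nbr v i \<notin> S}" using sk(4) F_iff by blast
    obtain m0 where m0: "m0 < k" "j0 = (s + m0) mod 6" using j0F sk(4) unfolding carc_def by blast
    have os: "emb (nbr v (s mod 6)) \<in> outer_face S"
      using prop_arc[OF Fs m0(1)] j0(3) m0(2) by simp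
    have allo: "\<forall>i\<in>F. emb (nbr v i) \<in> outer_face S"
    proof
      fix i assume "i \<in> F"
      then obtain m where "m < k" "i = (s + m) mod 6" using sk(4) unfolding carc_def by blast
      then show "emb (nbr v i) \<in> outer_face S" using prop_arc[OF Fs] os by simp
    qed
    have "local_outer_boundary S v F"
      unfolding local_outer_boundary_def using uniq allo by simp
    then show "\<exists>B. (\<forall>B'. local_boundary S v B' \<longleftrightarrow> B' = B) \<and> local_outer_boundary S v B"
      using uniq by blast
  next
    assume "\<exists>B. (\<forall>B'. local_boundary S v B' \<longleftrightarrow> B' = B) \<and> local_outer_boundary S v B"
    then obtain B where uniq: "\<And>B'. local_boundary S v B' \<longleftrightarrow> B' = B"
      and lob: "local_outer_boundary S v B" by blast
    have lbB: "local_boundary S v B" using uniq by simp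
    then have ciB: "cyclic_interval B" and BF: "B \<subseteq> F" using lb_iff by auto
    obtain s k where sk: "s < 6" "1 \<le> k" "k \<le> 6" "B = carc s k" using ciB cyclic_arc by blast
    have sB: "s \<in> B" unfolding sk(4) carc_def using sk by (intro CollectI exI[of _ 0]) simp
    have sF: "s < 6" "nbr v s \<notin> S" using BF sB F_iff by auto
    have ob: "v \<in> outer_boundary S"
      using ob_from_nbr[OF vS sF] lob sB unfolding local_outer_boundary_def by blast
    have FB: "F = B"
    proof (rule ccontr)
      assume "F \<noteq> B"
      then obtain i where i: "i \<in> F" "i \<notin> B" using BF by blast
      have i6: "i < 6" using i F_iff by simp
      define A where "A = {J. J \<subseteq> {0..<6} \<and> cyclic_interval J \<and> J \<subseteq> F \<and> i \<in> J}"
      have "finite A" unfolding A_def by (rule finite_subset[of _ "Pow {0..<6}"]) auto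
      moreover have "{i} \<in> A"
      proof -
        have "{i} = carc i 1" unfolding carc_def using i6 by auto
        then have "cyclic_interval {i}" unfolding cyclic_arc using i6 by (intro exI[of _ i]) auto
        then show ?thesis unfolding A_def using i i6 by auto
      qed
      ultimately obtain J where J: "J \<in> A" "\<forall>J'\<in>A. J \<subseteq> J' \<longrightarrow> J = J'"
        using finite_has_maximal[of A] by blast
      have "local_boundary S v J"
        unfolding lb_iff
      proof (intro conjI allI impI)
        show "cyclic_interval J" "J \<subseteq> F" using J(1) unfolding A_def by auto
      next
        fix J' assume "cyclic_interval J' \<and> J' \<subseteq> F \<and> J \<subseteq> J'"
        then have "J' \<in> A" using J(1) ci_sub unfolding A_def by blast
        then show "J' = J" using J(2) \<open>cyclic_interval J' \<and> J' \<subseteq> F \<and> J \<subseteq> J'\<close> by blast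
      qed
      then have "J = B" using uniq by blast
      then show False using J(1) i unfolding A_def by blast
    qed
    have "F \<noteq> {0..<6}" using Nne NF unfolding F_def by auto
    then have "cycconn ({0..<6} - F)" using K1 ciB FB by simp
    then have "redundant S v" using red_iff NF2 by simp
    then show "erodable S v" unfolding erodable_def using ob by simp
  qed
qed

end
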